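(* Let $G$ be a finite group and $H \leqslant G$ a Hall subgroup (i.e. $\gcd(|H|, |G:H|)=1$). If $H$ is exponential in $G$, then $H \lhd G$.
   Context: A subgroup $H$ of finite index in a group $G$ is called exponential in $G$ if $x^{|G:H|} \in H$ for every $x \in G$. *)

theory Defs
  imports "HOL-Algebra.Algebra"
begin

definition index :: "('a, 'b) monoid_scheme \<Rightarrow> 'a set \<Rightarrow> nat" where
  "index G H = card (rcosets\<^bsub>G\<^esub> H)"

definition exponential :: "('a, 'b) monoid_scheme \<Rightarrow> 'a set \<Rightarrow> bool" where
  "exponential G H \<longleftrightarrow> subgroup H G \<and> finite (rcosets\<^bsub>G\<^esub> H) \<and>
     (\<forall>x \<in> carrier G. x [^]\<^bsub>G\<^esub> index G H \<in> H)"

end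

theory Submission
  imports Defs "HOL-Number_Theory.Cong"
begin

lemma (in group) conj_pow:
  assumes "g \<in> carrier G" "h \<in> carrier G"
  shows "(g \<otimes> h \<otimes> inv g) [^] (k::nat) = g \<otimes> h [^] k \<otimes> inv g"
proof (induction k)
  case 0
  then show ?case using assms by simp
next
  case (Suc k)
  have "(g \<otimes> h \<otimes> inv g) [^] Suc k = (g \<otimes> h [^] k \<otimes> inv g) \<otimes> (g \<otimes> h \<otimes> inv g)"
    using Suc by simp
  also have "\<dots> = g \<otimes> (h [^] k \<otimes> h) \<otimes> inv g"
  proof -
    have c: "inv g \<otimes> (g \<otimes> y) = y" if "y \<in> carrier G" for y
      using assms that by (simp add: m_assoc[symmetric])
    show ?thesis using assms by (simp add: m_assoc c)
  qed
  finally show ?case using assms by simp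
qed

lemma (in group) pow_cong_one:
  assumes "x \<in> carrier G" "x [^] (m::nat) = \<one>" "[a = Suc 0] (mod m)"
  shows "x [^] a = x"
proof -
  have am: "a mod m = Suc 0 mod m" using assms(3) by (simp add: cong_def)
  have "x [^] a = x [^] (a mod m + m * (a div m))" by simp
  also have "\<dots> = x [^] (a mod m) \<otimes> (x [^] m) [^] (a div m)"
    using assms(1) by (simp add: nat_pow_mult nat_pow_pow)
  also have "\<dots> = x [^] (Suc 0 mod m)" using assms am by simp
  finally have e: "x [^] a = x [^] (Suc 0 mod m)" .
  show ?thesis
  proof (cases "m = 1")
    case True
    then have "x = \<one>" using assms(1,2) by simp
    then show ?thesis using e True by simp
  next
    case False
    then show ?thesis using e assms(1) by (cases m) auto
  qed
qed

lemma (in group) main_aux: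
  assumes "coprime (card H) (index G H)" and "exponential G H" and "subgroup H G"
  shows "H \<lhd> G"
proof -
  let ?m = "card H" and ?n = "index G H"
  have exp: "\<And>x. x \<in> carrier G \<Longrightarrow> x [^] ?n \<in> H"
    using assms(2) unfolding exponential_def by blast
  have hsub: "H \<subseteq> carrier G" using assms(3) subgroup.subset by blast
  have grpH: "group (G\<lparr>carrier := H\<rparr>)" using assms(3) subgroup_imp_group by blast
  have h1: "h [^] ?m = \<one>" if "h \<in> H" for h
  proof -
    have "h [^]\<^bsub>G\<lparr>carrier := H\<rparr>\<^esub> order (G\<lparr>carrier := H\<rparr>) = \<one>\<^bsub>G\<lparr>carrier := H\<rparr>\<^esub>"
      using group.pow_order_eq_1[OF grpH] that by simp
    then show ?thesis using nat_pow_consistent[of h \<open>card H\<close> H] by (simp add: order_def)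
  qed
  obtain a where a: "[?n * a = Suc 0] (mod ?m)"
    using cong_solve_coprime_nat assms(1) by (metis coprime_commute)
  have bk: "x \<in> H" if "x \<in> carrier G" "x [^] ?m = \<one>" for x
  proof -
    have "x [^] (?n * a) = x" using pow_cong_one[OF that a] .
    moreover have "x [^] (?n * a) = (x [^] ?n) [^] a" using that by (simp add: nat_pow_pow)
    moreover have "(x [^] ?n) [^] a \<in> H"
    proof -
      have y: "x [^] ?n \<in> H" using exp[OF that(1)] .
      have "(x [^] ?n) [^]\<^bsub>G\<lparr>carrier := H\<rparr>\<^esub> a \<in> carrier (G\<lparr>carrier := H\<rparr>)"
        using monoid.nat_pow_closed[OF group.is_monoid[OF grpH]] y by simp
      then show ?thesis using nat_pow_consistent[of \<open>x [^] ?n\<close> a H] by simp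
    qed
    ultimately show ?thesis by simp
  qed
  show ?thesis unfolding normal_inv_iff
  proof (intro conjI ballI)
    show "subgroup H G" by fact
  next
    fix x h assume x: "x \<in> carrier G" and h: "h \<in> H"
    have hc: "h \<in> carrier G" using h hsub by blast
    have "(x \<otimes> h \<otimes> inv x) [^] ?m = \<one>"
      using conj_pow[OF x hc] h1[OF h] x by simp
    then show "x \<otimes> h \<otimes> inv x \<in> H" using bk x hc by simp
  qed
qed


theorem corollary4p4:
  fixes G :: "('a, 'b) monoid_scheme" and H :: "'a set"
  assumes "group G" and "finite (carrier G)" and "subgroup H G"
    and "coprime (card H) (index G H)"
    and "exponential G H"
  shows "H \<lhd> G"
  using group.main_aux[OF assms(1) assms(4) assms(5) assms(3)] .

end
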